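(* Let $A$ be a finite set of options containing a distinguished default option $0$, and let $\mathcal{L}$ be the set of all Llull matrices on $A$, viewed as a subset of a finite-dimensional real space. For $v\in\mathcal{L}$ let $W(v)$ denote the set of path-revised approval choices of $v$. Then $W$ is upper semicontinuous on $\mathcal{L}$: every $v\in\mathcal{L}$ has a neighbourhood $U$ such that $W(w)\subseteq W(v)$ for every $w\in U\cap\mathcal{L}$.
   Context: A Llull matrix on $A$ is a family of real numbers $v_{xy}\in[0,1]$, indexed by ordered pairs $(x,y)$ of distinct elements of $A$, with $v_{xy}+v_{yx}\le1$. Path scores: $v^*_{xy}=\max\min(v_{x_0x_1},\dots,v_{x_{m-1}x_m})$ over all paths $x_0\dots x_m$ ($m\ge1$, $x_0=x$, $x_m=y$, $x_i$ pairwise distinct). For $z\in A$ put $D_v(z)=v^*_{z0}-v^*_{0z}$ if $z\ne0$ and $D_v(0)=0$. An option $x\in A$ is a path-revised approval choice of $v$ if $D_v(x)\ge D_v(y)$ for all $y\in A\setminus\{x\}$; $W(v)$ is the set of these options. *)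

theory Defs
  imports Main "HOL-Analysis.Analysis"
begin

definition llull :: "'a set \<Rightarrow> ('a \<Rightarrow> 'a \<Rightarrow> real) \<Rightarrow> bool" where
  "llull A v \<longleftrightarrow> (\<forall>x\<in>A. \<forall>y\<in>A. x \<noteq> y \<longrightarrow>
      0 \<le> v x y \<and> v x y \<le> 1 \<and> v x y + v y x \<le> 1)"

definition paths :: "'a set \<Rightarrow> 'a \<Rightarrow> 'a \<Rightarrow> 'a list set" where
  "paths A x y = {xs. 2 \<le> length xs \<and> distinct xs \<and> set xs \<subseteq> A \<and>
      hd xs = x \<and> last xs = y}"

definition path_min :: "('a \<Rightarrow> 'a \<Rightarrow> real) \<Rightarrow> 'a list \<Rightarrow> real" where
  "path_min v xs = Min (set (map (\<lambda>(a, b). v a b) (zip xs (tl xs))))"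

definition path_score :: "'a set \<Rightarrow> ('a \<Rightarrow> 'a \<Rightarrow> real) \<Rightarrow> 'a \<Rightarrow> 'a \<Rightarrow> real" where
  "path_score A v x y = Max (path_min v ` paths A x y)"

definition Dv :: "'a set \<Rightarrow> 'a \<Rightarrow> ('a \<Rightarrow> 'a \<Rightarrow> real) \<Rightarrow> 'a \<Rightarrow> real" where
  "Dv A o0 v z = (if z = o0 then 0 else path_score A v z o0 - path_score A v o0 z)"

definition Wch :: "'a set \<Rightarrow> 'a \<Rightarrow> ('a \<Rightarrow> 'a \<Rightarrow> real) \<Rightarrow> 'a set" where
  "Wch A o0 v = {x\<in>A. \<forall>y\<in>A - {x}. Dv A o0 v x \<ge> Dv A o0 v y}"

end

theory Submission
  imports Defs
begin

lemma min_close: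
  assumes "finite S" "S \<noteq> {}" "\<forall>s\<in>S. f s \<le> g s + e"
  shows "Min (f ` S) \<le> Min (g ` S) + (e::real)"
proof -
  have "Min (g ` S) \<in> g ` S" using assms by simp
  then obtain s where s: "s \<in> S" "Min (g ` S) = g s" by auto
  have "Min (f ` S) \<le> f s" using assms s by auto
  moreover have "f s \<le> g s + e" using assms s by auto
  ultimately show ?thesis using s by linarith
qed

lemma max_close:
  assumes "finite S" "S \<noteq> {}" "\<forall>s\<in>S. f s \<le> g s + e"
  shows "Max (f ` S) \<le> Max (g ` S) + (e::real)"
proof -
  have "Max (f ` S) \<in> f ` S" using assms by simp
  then obtain s where s: "s \<in> S" "Max (f ` S) = f s" by auto
  have "g s \<le> Max (g ` S)" using assms s by auto
  moreover have "f s \<le> g s + e" using assms s by auto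
  ultimately show ?thesis using s by linarith
qed

lemma edge_props:
  assumes "distinct xs" "(a,b) \<in> set (zip xs (tl xs))"
  shows "a \<in> set xs" "b \<in> set xs" "a \<noteq> b"
proof -
  show "a \<in> set xs" using assms(2) by (meson set_zip_leftD)
  show "b \<in> set xs" using assms(2) by (cases xs) (auto dest: set_zip_rightD)
  obtain n where n: "xs ! n = a" "tl xs ! n = b" "n < length xs" "n < length (tl xs)"
    using assms(2) by (auto simp: in_set_zip)
  have "tl xs ! n = xs ! Suc n" using n by (simp add: nth_tl)
  moreover have "Suc n < length xs" using n by simp
  ultimately show "a \<noteq> b" using n assms(1) by (metis nth_eq_iff_index_eq n_not_Suc_n)
qed

lemma path_min_close:
  assumes "xs \<in> paths A x y" "\<forall>a\<in>A. \<forall>b\<in>A. a \<noteq> b \<longrightarrow> w a b \<le> v a b + e"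
  shows "path_min w xs \<le> path_min v xs + e"
proof -
  let ?S = "set (zip xs (tl xs))"
  have d: "distinct xs" "set xs \<subseteq> A" "2 \<le> length xs" using assms(1) by (auto simp: paths_def)
  obtain a b r where "xs = a # b # r" using d(3)
    by (metis Suc_le_length_iff numeral_2_eq_2)
  then have ne: "?S \<noteq> {}" by simp
  have "\<forall>s\<in>?S. (\<lambda>(a,b). w a b) s \<le> (\<lambda>(a,b). v a b) s + e"
    using edge_props[OF d(1)] d(2) assms(2) by fastforce
  from min_close[OF _ ne this] show ?thesis
    unfolding path_min_def by (simp add: image_image)
qed

lemma paths_finite:
  assumes "finite A" shows "finite (paths A x y)"
proof -
  have "paths A x y \<subseteq> {xs. set xs \<subseteq> A \<and> length xs \<le> card A}"
    unfolding paths_def using assms by (auto simp: card_mono distinct_card[symmetric])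
  then show ?thesis using finite_lists_length_le[OF assms] by (rule finite_subset)
qed

lemma score_close:
  assumes "finite A" "x \<in> A" "y \<in> A" "x \<noteq> y"
    "\<forall>a\<in>A. \<forall>b\<in>A. a \<noteq> b \<longrightarrow> w a b \<le> v a b + e"
  shows "path_score A w x y \<le> path_score A v x y + e"
proof -
  have "[x,y] \<in> paths A x y" using assms by (auto simp: paths_def)
  then have ne: "paths A x y \<noteq> {}" by auto
  show ?thesis unfolding path_score_def
  proof (rule max_close[OF paths_finite[OF assms(1)] ne])
    show "\<forall>s\<in>paths A x y. path_min w s \<le> path_min v s + e"
      using path_min_close[OF _ assms(5)] by blast
  qed
qed

lemma D_close:
  assumes "finite A" "o0 \<in> A" "z \<in> A" "e \<ge> 0"
    "\<forall>a\<in>A. \<forall>b\<in>A. a \<noteq> b \<longrightarrow> \<bar>w a b - v a b\<bar> \<le> e"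
  shows "\<bar>Dv A o0 w z - Dv A o0 v z\<bar> \<le> 2 * e"
proof (cases "z = o0")
  case True then show ?thesis using assms by (simp add: Dv_def)
next
  case False
  have h1: "\<forall>a\<in>A. \<forall>b\<in>A. a \<noteq> b \<longrightarrow> w a b \<le> v a b + e"
   and h2: "\<forall>a\<in>A. \<forall>b\<in>A. a \<noteq> b \<longrightarrow> v a b \<le> w a b + e" using assms(5) by (fastforce simp: abs_le_iff)+
  have "path_score A w z o0 \<le> path_score A v z o0 + e"
    by (rule score_close[OF assms(1,3,2) False h1])
  moreover have "path_score A v z o0 \<le> path_score A w z o0 + e"
    by (rule score_close[OF assms(1,3,2) False h2])
  moreover have "path_score A w o0 z \<le> path_score A v o0 z + e"
    using False by (intro score_close[OF assms(1,2,3) _ h1]) auto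
  moreover have "path_score A v o0 z \<le> path_score A w o0 z + e"
    using False by (intro score_close[OF assms(1,2,3) _ h2]) auto
  ultimately show ?thesis using False by (simp add: Dv_def abs_le_iff)
qed

theorem theorem3p3:
  fixes A :: "'a set" and o0 :: 'a and v :: "'a \<Rightarrow> 'a \<Rightarrow> real"
  assumes "finite A" and "o0 \<in> A" and "llull A v"
  shows "\<exists>\<epsilon>>0. \<forall>w. llull A w \<and>
           (\<forall>x\<in>A. \<forall>y\<in>A. x \<noteq> y \<longrightarrow> \<bar>w x y - v x y\<bar> < \<epsilon>)
           \<longrightarrow> Wch A o0 w \<subseteq> Wch A o0 v"
proof -
  define D where "D = Dv A o0 v"
  define S where "S = A - Wch A o0 v"
  define M where "M = Max (D ` A)"
  have fin: "finite (D ` A)" "D ` A \<noteq> {}" using assms by auto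
  have Mge: "\<And>z. z \<in> A \<Longrightarrow> D z \<le> M" unfolding M_def using fin by auto
  obtain m where m: "m \<in> A" "D m = M" unfolding M_def using Max_in[OF fin] by auto
  have gap: "\<And>x. x \<in> S \<Longrightarrow> D x < M"
  proof -
    fix x assume "x \<in> S"
    then obtain y where "y \<in> A" "D y > D x" unfolding S_def Wch_def D_def by (auto simp: not_le)
    then show "D x < M" using Mge by force
  qed
  show ?thesis
  proof (cases "S = {}")
    case True
    then have "Wch A o0 v = A" unfolding S_def Wch_def by auto
    then show ?thesis by (intro exI[of _ 1]) (auto simp: Wch_def)
  next
    case False
    define \<delta> where "\<delta> = Min ((\<lambda>x. M - D x) ` S)"
    have finS: "finite S" using assms S_def by auto
    have dpos: "\<delta> > 0" unfolding \<delta>_def using finS False gap by (subst Min_gr_iff) auto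
    have dle: "\<And>x. x \<in> S \<Longrightarrow> \<delta> \<le> M - D x" unfolding \<delta>_def using finS by auto
    show ?thesis
    proof (intro exI[of _ "\<delta>/5"] conjI allI impI)
      show "\<delta>/5 > 0" using dpos by simp
    next
      fix w assume w: "llull A w \<and> (\<forall>x\<in>A. \<forall>y\<in>A. x \<noteq> y \<longrightarrow> \<bar>w x y - v x y\<bar> < \<delta>/5)"
      have cl: "\<And>z. z \<in> A \<Longrightarrow> \<bar>Dv A o0 w z - D z\<bar> \<le> 2 * (\<delta>/5)"
        unfolding D_def by (rule D_close[OF assms(1,2)]) (use w dpos in fastforce)+
      show "Wch A o0 w \<subseteq> Wch A o0 v"
      proof
        fix x assume x: "x \<in> Wch A o0 w"
        show "x \<in> Wch A o0 v"
        proof (rule ccontr)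
          assume "x \<notin> Wch A o0 v"
          then have xS: "x \<in> S" using x unfolding S_def Wch_def by auto
          have "D x < M" using gap xS .
          then have "m \<noteq> x" using m by auto
          then have "Dv A o0 w x \<ge> Dv A o0 w m" using x m unfolding Wch_def by auto
          moreover have "x \<in> A" using xS S_def by auto
          ultimately show False using cl[of x] cl[of m] m dle[OF xS] dpos
            unfolding abs_le_iff by linarith
        qed
      qed
    qed
  qed
qed

end
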